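(* Let $a<b$ and let $f:[a,b]\rightarrow\mathbb{R}$ be a twice continuously differentiable mapping in $(a,b)$ with $f''\in L^2[a,b]$. Then for all $x\in[a,\frac{a+b}{2}]$, \[ \left|\frac{f(x)+f(a+b-x)}{2}-\frac{1}{b-a}\int_{a}^{b}f(t)\,dt\right| \leq \frac{(b-a)^{1/2}}{\pi}\left[\frac{(b-a)^2}{48}+\left(x-\frac{3a+b}{4}\right)^2\right]^{1/2}\|f''\|_2. \]
   Context: $\|g\|_2=\left(\int_a^b g(t)^2\,dt\right)^{1/2}$. *)

theory Defs
  imports "HOL-Analysis.Analysis"
begin

definition L2norm :: "(real \<Rightarrow> real) \<Rightarrow> real \<Rightarrow> real \<Rightarrow> real" where
  "L2norm g a b = sqrt (integral {a..b} (\<lambda>t. (g t)\<^sup>2))"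

end

theory Submission
  imports Defs
begin


lemma deriv_bound:
  fixes f' f'' :: "real \<Rightarrow> real"
  assumes ab: "a < b"
    and d2: "\<And>t. t \<in> {a<..<b} \<Longrightarrow> (f' has_real_derivative f'' t) (at t)"
    and sq: "(\<lambda>t. (f'' t)\<^sup>2) integrable_on {a..b}"
  shows "\<exists>M. \<forall>t\<in>{a<..<b}. \<bar>f' t\<bar> \<le> M"
proof -
  define c where "c = (a+b)/2"
  define K where "K = integral {a..b} (\<lambda>t. (1 + (f'' t)\<^sup>2)/2)"
  have hint: "(\<lambda>t. (1 + (f'' t)\<^sup>2)/2) integrable_on {a..b}"
    by (intro integrable_on_divide integrable_add sq) auto
  have key: "\<bar>f' hi - f' lo\<bar> \<le> K" if "a < lo" "lo \<le> hi" "hi < b" for lo hi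
  proof -
    have sub: "{lo..hi} \<subseteq> {a..b}" using that by auto
    have ftc: "(f'' has_integral (f' hi - f' lo)) {lo..hi}"
      apply (rule fundamental_theorem_of_calculus[OF \<open>lo \<le> hi\<close>])
      using d2 that
      by (auto simp: has_real_derivative_iff_has_vector_derivative[symmetric] intro: has_field_derivative_at_within)
    have i1: "f'' integrable_on {lo..hi}" using ftc by blast
    have i2: "(\<lambda>t. (1 + (f'' t)\<^sup>2)/2) integrable_on {lo..hi}"
      using integrable_on_subinterval[OF hint sub] .
    have pw1: "f'' t \<le> (1 + (f'' t)\<^sup>2)/2" for t
      using sum_squares_ge_zero[of "f'' t - 1" 0] by (simp add: power2_eq_square algebra_simps)
    have pw2: "- f'' t \<le> (1 + (f'' t)\<^sup>2)/2" for t
      using sum_squares_ge_zero[of "f'' t + 1" 0] by (simp add: power2_eq_square algebra_simps)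
    have "integral {lo..hi} f'' \<le> integral {lo..hi} (\<lambda>t. (1 + (f'' t)\<^sup>2)/2)"
      by (rule integral_le[OF i1 i2 pw1])
    moreover have "- integral {lo..hi} f'' \<le> integral {lo..hi} (\<lambda>t. (1 + (f'' t)\<^sup>2)/2)"
      using integral_le[OF integrable_neg[OF i1] i2 pw2] by simp
    moreover have "integral {lo..hi} (\<lambda>t. (1 + (f'' t)\<^sup>2)/2) \<le> K"
      unfolding K_def by (rule integral_subset_le[OF sub i2 hint]) auto
    moreover have "integral {lo..hi} f'' = f' hi - f' lo" using ftc by (simp add: integral_unique)
    ultimately show ?thesis by linarith
  qed
  have "\<bar>f' t\<bar> \<le> \<bar>f' c\<bar> + K" if "t \<in> {a<..<b}" for t
  proof (cases "t \<le> c")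
    case True
    then have "\<bar>f' c - f' t\<bar> \<le> K" using key[of t c] that ab by (auto simp: c_def)
    then show ?thesis by linarith
  next
    case False
    then have "\<bar>f' t - f' c\<bar> \<le> K" using key[of c t] that ab by (auto simp: c_def)
    then show ?thesis by linarith
  qed
  then show ?thesis by blast
qed

lemma real_cs_aux:
  fixes A B I :: real
  assumes "A \<ge> 0" "B \<ge> 0" and h: "\<And>\<alpha>. \<alpha> > 0 \<Longrightarrow> 2 * I \<le> \<alpha> * A + B / \<alpha>"
  shows "I \<le> sqrt A * sqrt B"
proof (cases "A > 0 \<and> B > 0")
  case True
  define \<alpha> where "\<alpha> = sqrt B / sqrt A"
  have "\<alpha> > 0" using True by (simp add: \<alpha>_def)
  have sA: "sqrt A > 0" "sqrt A * sqrt A = A" using True by auto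
  have sB: "sqrt B > 0" "sqrt B * sqrt B = B" using True by auto
  have "\<alpha> * A = sqrt A * sqrt B" unfolding \<alpha>_def using sA
    by (simp add: field_simps)
  moreover have "B / \<alpha> = sqrt A * sqrt B" unfolding \<alpha>_def using sA sB
    by (simp add: field_simps)
  ultimately show ?thesis using h[OF \<open>\<alpha> > 0\<close>] by linarith
next
  case False
  show ?thesis
  proof (rule ccontr)
    assume "\<not> ?thesis"
    then have I: "I > 0" using False assms by auto
    show False
    proof (cases "A = 0")
      case True
      have "B / I \<ge> 0" using I assms(2) by simp
      then have pos: "B / I + 1 > 0" by linarith
      have "2 * I \<le> B / (B / I + 1)" using h[OF pos] True by simp
      also have "\<dots> = B * I / (B + I)" using I by (simp add: field_simps)
      also have "\<dots> \<le> I" using I assms by (simp add: field_simps add_pos_nonneg)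
      finally show False using I by linarith
    next
      case False
      then have B: "B = 0" using \<open>\<not> (A > 0 \<and> B > 0)\<close> assms by auto
      have "2 * I \<le> (I / (A + 1)) * A" using h[of "I/(A+1)"] B I assms by simp
      also have "\<dots> \<le> I" using I assms by (simp add: field_simps)
      finally show False using I by linarith
    qed
  qed
qed

lemma prod_cont:
  fixes Q g :: "real \<Rightarrow> real"
  assumes sub: "{c..d} \<subseteq> {a..b}" and cQ: "continuous_on {c..d} Q"
    and cg: "\<And>t. t \<in> {a<..<b} \<Longrightarrow> isCont g t"
    and bd: "\<And>t. \<bar>g t\<bar> \<le> M"
    and z: "\<And>t. t \<in> {c..d} \<Longrightarrow> t \<notin> {a<..<b} \<Longrightarrow> Q t = 0"
  shows "continuous_on {c..d} (\<lambda>t. Q t * g t)"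
  unfolding continuous_on_eq_continuous_within
proof
  fix t assume t: "t \<in> {c..d}"
  have cQt: "continuous (at t within {c..d}) Q"
    using cQ t by (simp add: continuous_on_eq_continuous_within)
  show "continuous (at t within {c..d}) (\<lambda>t. Q t * g t)"
  proof (cases "t \<in> {a<..<b}")
    case True
    then show ?thesis using cQt cg[OF True]
      by (intro continuous_intros) (auto intro: continuous_at_imp_continuous_within)
  next
    case False
    then have Qt: "Q t = 0" using z t by auto
    have lim: "(Q \<longlongrightarrow> 0) (at t within {c..d})"
      using cQt Qt by (simp add: continuous_within)
    have "((\<lambda>s. M * \<bar>Q s\<bar>) \<longlongrightarrow> M * \<bar>0\<bar>) (at t within {c..d})"
      by (intro tendsto_intros lim)
    then have l2: "((\<lambda>s. M * \<bar>Q s\<bar>) \<longlongrightarrow> 0) (at t within {c..d})" by simp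
    have "((\<lambda>s. Q s * g s) \<longlongrightarrow> 0) (at t within {c..d})"
    proof (rule Lim_null_comparison[OF _ l2])
      show "\<forall>\<^sub>F x in at t within {c..d}. norm (Q x * g x) \<le> M * \<bar>Q x\<bar>"
      proof (rule always_eventually, rule allI)
        fix x
        have "\<bar>Q x\<bar> * \<bar>g x\<bar> \<le> \<bar>Q x\<bar> * M" by (rule mult_left_mono[OF bd]) simp
        then show "norm (Q x * g x) \<le> M * \<bar>Q x\<bar>" by (simp add: abs_mult mult.commute)
      qed
    qed
    then show ?thesis using Qt by (simp add: continuous_within)
  qed
qed

lemma piece:
  fixes f f' f'' g Q :: "real \<Rightarrow> real"
  assumes cd: "c \<le> d" and sub: "{c..d} \<subseteq> {a..b}"
    and cf: "continuous_on {a..b} f"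
    and cQg: "continuous_on {c..d} (\<lambda>t. Q t * g t)"
    and d1: "\<And>t. t \<in> {a<..<b} \<Longrightarrow> (f has_real_derivative f' t) (at t)"
    and dg: "\<And>t. t \<in> {a<..<b} \<Longrightarrow> (g has_real_derivative f'' t) (at t)"
    and gf: "\<And>t. t \<in> {a<..<b} \<Longrightarrow> g t = f' t"
    and dQ: "\<And>t. (Q has_real_derivative (t - k)) (at t)"
  shows "((\<lambda>t. Q t * f'' t) has_integral
     ((Q d * g d - (d - k) * f d + integral {a..d} f) - (Q c * g c - (c - k) * f c + integral {a..c} f))) {c..d}"
proof -
  define \<Phi> where "\<Phi> t = Q t * g t - (t - k) * f t + integral {a..t} f" for t
  have cF: "continuous_on {a..b} (\<lambda>t. integral {a..t} f)"
    by (rule indefinite_integral_continuous_1[OF integrable_continuous_interval[OF cf]])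
  have "continuous_on {c..d} \<Phi>"
    unfolding \<Phi>_def
    by (intro continuous_on_add continuous_on_diff continuous_on_mult cQg continuous_on_subset[OF cf sub]
        continuous_on_subset[OF cF sub] continuous_intros)
  moreover have "(\<Phi> has_vector_derivative (Q t * f'' t)) (at t)" if t: "t \<in> {c<..<d}" for t
  proof -
    have tab: "t \<in> {a<..<b}" using t sub cd by auto
    have dF: "((\<lambda>t. integral {a..t} f) has_real_derivative f t) (at t)"
      using integral_has_real_derivative[OF cf, of t] tab by (simp add: at_within_Icc_at)
    have A: "((\<lambda>x. Q x * g x) has_real_derivative ((t-k) * g t + f'' t * Q t)) (at t)"
      by (rule DERIV_mult[OF dQ dg[OF tab]])
    have B: "((\<lambda>x. (x - k) * f x) has_real_derivative (1 * f t + f' t * (t - k))) (at t)"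
      by (rule DERIV_mult[OF _ d1[OF tab]]) (auto intro!: derivative_eq_intros)
    have "(\<Phi> has_real_derivative ((t-k) * g t + f'' t * Q t - (1 * f t + f' t * (t - k)) + f t)) (at t)"
      unfolding \<Phi>_def by (rule DERIV_add[OF DERIV_diff[OF A B] dF])
    moreover have "(t-k) * g t + f'' t * Q t - (1 * f t + f' t * (t - k)) + f t = Q t * f'' t"
      using gf[OF tab] by (simp add: algebra_simps)
    ultimately have "(\<Phi> has_real_derivative Q t * f'' t) (at t)" by metis
    then show ?thesis by (simp add: has_real_derivative_iff_has_vector_derivative)
  qed
  ultimately have "((\<lambda>t. Q t * f'' t) has_integral (\<Phi> d - \<Phi> c)) {c..d}"
    by (intro fundamental_theorem_of_calculus_interior[OF cd]) auto
  then show ?thesis by (simp add: \<Phi>_def)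
qed



lemma polyineq:
  fixes u v :: real
  assumes "u \<ge> 0" "v \<ge> 0"
  shows "10*(u^5/10 + v^5/10 + (u^2 - v^2) * v^3 / 3 + (u^2 - v^2)^2 * v / 2) \<le> (2*(u+v))^3 * (((u-v)/2)^2 + (2*(u+v))^2/48)"
proof -
  have e: "(2*(u+v))^3 * (((u-v)/2)^2 + (2*(u+v))^2/48) - 10*(u^5/10 + v^5/10 + (u^2 - v^2) * v^3 / 3 + (u^2 - v^2)^2 * v / 2)
     = (16*u* v^4 + 28*u^2* v^3 + 8*u^3* v^2 + u^4* v + 5*u^5)/3"
    by (simp add: field_simps eval_nat_numeral)
  have "0 \<le> (16*u* v^4 + 28*u^2* v^3 + 8*u^3* v^2 + u^4* v + 5*u^5)/3" using assms by simp
  then show ?thesis using e by linarith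
qed

lemma pw_ineq:
  fixes p q \<alpha> :: real
  assumes "\<alpha> > 0"
  shows "2*(p*q) \<le> \<alpha> * p^2 + q^2/\<alpha>"
proof -
  have "0 \<le> (\<alpha>*p - q)^2/\<alpha>" using assms by simp
  also have "(\<alpha>*p - q)^2/\<alpha> = \<alpha> * p^2 + q^2/\<alpha> - 2*(p*q)"
    using assms by (simp add: field_simps power2_eq_square)
  finally show ?thesis by simp
qed

lemma poly_int1:
  fixes c d k :: real
  assumes "c \<le> d"
  shows "((\<lambda>t. ((t-k)^2/2)^2) has_integral ((d-k)^5/20 - (c-k)^5/20)) {c..d}"
proof (rule fundamental_theorem_of_calculus[OF assms])
  fix t assume "t \<in> {c..d}"
  have "((\<lambda>t. (t-k)^5/20) has_real_derivative ((t-k)^2/2)^2) (at t within {c..d})"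
    by (auto intro!: derivative_eq_intros simp: field_simps power2_eq_square eval_nat_numeral)
  then show "((\<lambda>t. (t-k)^5/20) has_vector_derivative ((t-k)^2/2)^2) (at t within {c..d})"
    by (simp add: has_real_derivative_iff_has_vector_derivative)
qed

lemma poly_int2:
  fixes c d m C :: real
  assumes "c \<le> d"
  defines "G \<equiv> \<lambda>t. ((t-m)^5/5 + 2*C*(t-m)^3/3 + C^2*(t-m))/4"
  shows "((\<lambda>t. (((t-m)^2 + C)/2)^2) has_integral (G d - G c)) {c..d}"
proof (rule fundamental_theorem_of_calculus[OF assms(1)])
  fix t assume "t \<in> {c..d}"
  have "(G has_real_derivative (((t-m)^2 + C)/2)^2) (at t within {c..d})"
    unfolding G_def
    by (auto intro!: derivative_eq_intros simp: field_simps power2_eq_square eval_nat_numeral)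
  then show "(G has_vector_derivative (((t-m)^2 + C)/2)^2) (at t within {c..d})"
    by (simp add: has_real_derivative_iff_has_vector_derivative)
qed



lemma int_cs:
  fixes p q :: "real \<Rightarrow> real"
  assumes ipq: "(\<lambda>t. p t * q t) integrable_on S"
    and hA: "((\<lambda>t. (p t)^2) has_integral A) S" and hB: "((\<lambda>t. (q t)^2) has_integral B) S"
  shows "\<bar>integral S (\<lambda>t. p t * q t)\<bar> \<le> sqrt A * sqrt B"
proof -
  have A0: "A \<ge> 0" by (rule has_integral_nonneg[OF hA]) simp
  have B0: "B \<ge> 0" by (rule has_integral_nonneg[OF hB]) simp
  have main: "2 * integral S (\<lambda>t. p t * q t) \<le> \<alpha> * A + B / \<alpha>
      \<and> 2 * (- integral S (\<lambda>t. p t * q t)) \<le> \<alpha> * A + B / \<alpha>" if "\<alpha> > 0" for \<alpha>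
  proof -
    have hs: "((\<lambda>t. \<alpha> * (p t)^2 + (q t)^2 / \<alpha>) has_integral (\<alpha> * A + B / \<alpha>)) S"
      by (intro has_integral_add has_integral_mult_right has_integral_divide hA hB)
    have i2: "(\<lambda>t. 2 * (p t * q t)) integrable_on S" using ipq by simp
    have i3: "(\<lambda>t. 2 * (- p t * q t)) integrable_on S"
      using integrable_neg[OF i2] by simp
    have i4: "(\<lambda>t. \<alpha> * (p t)^2 + (q t)^2 / \<alpha>) integrable_on S" using hs by blast
    have l1: "2 * (p t * q t) \<le> \<alpha> * (p t)^2 + (q t)^2 / \<alpha>" for t
      by (rule pw_ineq[OF that])
    have l2: "2 * (- p t * q t) \<le> \<alpha> * (p t)^2 + (q t)^2 / \<alpha>" for t
      using pw_ineq[OF that, of "- p t" "q t"] by simp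
    have "integral S (\<lambda>t. 2 * (p t * q t)) \<le> integral S (\<lambda>t. \<alpha> * (p t)^2 + (q t)^2 / \<alpha>)"
      by (rule integral_le[OF i2 i4 l1])
    moreover have "integral S (\<lambda>t. 2 * (- p t * q t)) \<le> integral S (\<lambda>t. \<alpha> * (p t)^2 + (q t)^2 / \<alpha>)"
      by (rule integral_le[OF i3 i4 l2])
    moreover have "integral S (\<lambda>t. 2 * (p t * q t)) = 2 * integral S (\<lambda>t. p t * q t)"
      by simp
    moreover have "integral S (\<lambda>t. 2 * (- p t * q t)) = 2 * (- integral S (\<lambda>t. p t * q t))"
      by simp
    ultimately show ?thesis using integral_unique[OF hs] by simp
  qed
  have "integral S (\<lambda>t. p t * q t) \<le> sqrt A * sqrt B"
    by (rule real_cs_aux[OF A0 B0]) (use main in blast)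
  moreover have "- integral S (\<lambda>t. p t * q t) \<le> sqrt A * sqrt B"
    by (rule real_cs_aux[OF A0 B0]) (use main in blast)
  ultimately show ?thesis by linarith
qed



theorem theorem2p2:
  fixes f f' f'' :: "real \<Rightarrow> real" and a b :: real
  assumes "a < b"
    and "continuous_on {a..b} f"
    and "\<And>t. t \<in> {a<..<b} \<Longrightarrow> (f has_real_derivative f' t) (at t)"
    and "\<And>t. t \<in> {a<..<b} \<Longrightarrow> (f' has_real_derivative f'' t) (at t)"
    and "continuous_on {a<..<b} f''"
    and "f'' \<in> borel_measurable (lebesgue_on {a..b})"
    and "(\<lambda>t. (f'' t)\<^sup>2) integrable_on {a..b}"
  shows "\<forall>x \<in> {a..(a+b)/2}.
    \<bar>(f x + f (a + b - x)) / 2 - (1 / (b - a)) * integral {a..b} f\<bar>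
      \<le> sqrt (b - a) / pi * sqrt ((b - a)\<^sup>2 / 48 + (x - (3*a + b)/4)\<^sup>2) * L2norm f'' a b"
proof
  note ab = assms(1) and cf = assms(2) and d1 = assms(3) and d2 = assms(4) and sq = assms(7)
  fix x assume x: "x \<in> {a..(a+b)/2}"
  define m where "m = (a+b)/2"
  define x' where "x' = a + b - x"
  define g where "g = (\<lambda>t. if t \<in> {a<..<b} then f' t else 0)"
  define C where "C = (x-a)^2 - (m-x)^2"
  define P1 where "P1 = (\<lambda>t::real. (t-a)^2/2)"
  define P2 where "P2 = (\<lambda>t::real. ((t-m)^2 + C)/2)"
  define P3 where "P3 = (\<lambda>t::real. (t-b)^2/2)"
  define Pw where "Pw = (\<lambda>t. if t \<le> x then P1 t else if t \<le> x' then P2 t else P3 t)"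
  define F where "F = (\<lambda>t. integral {a..t} f)"
  have xa: "a \<le> x" and xm: "x \<le> m" using x by (auto simp: m_def)
  have xx': "x \<le> x'" and x'b: "x' \<le> b" and mx': "m \<le> x'" using xa xm by (auto simp: x'_def m_def)
  have xb: "x < b" using xm ab by (simp add: m_def)
  have ax': "a < x'" using xb by (simp add: x'_def)
  obtain M0 where M0: "\<forall>t\<in>{a<..<b}. \<bar>f' t\<bar> \<le> M0" using deriv_bound[OF ab d2 sq] by blast
  define M where "M = max M0 0"
  have bd: "\<bar>g t\<bar> \<le> M" for t using M0 by (auto simp: g_def M_def le_max_iff_disj)
  have gf: "g t = f' t" if "t \<in> {a<..<b}" for t using that by (simp add: g_def)
  have dg: "(g has_real_derivative f'' t) (at t)" if t: "t \<in> {a<..<b}" for t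
    by (rule has_field_derivative_transform_within_open[OF d2[OF t] open_greaterThanLessThan t])
       (simp add: g_def)
  have cg: "isCont g t" if "t \<in> {a<..<b}" for t using DERIV_isCont[OF dg[OF that]] .
  have I1: "((\<lambda>t. P1 t * f'' t) has_integral
      ((P1 x * g x - (x - a) * f x + F x) - (P1 a * g a - (a - a) * f a + F a))) {a..x}"
    unfolding F_def
  proof (rule piece[OF xa _ cf _ d1 dg gf])
    show "{a..x} \<subseteq> {a..b}" using xb by auto
    show "continuous_on {a..x} (\<lambda>t. P1 t * g t)"
      by (rule prod_cont[of a x a b, OF _ _ cg bd]) (use xb in \<open>auto simp: P1_def intro!: continuous_intros\<close>)
    show "(P1 has_real_derivative t - a) (at t)" for t
      unfolding P1_def by (auto intro!: derivative_eq_intros simp: power2_eq_square field_simps)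
  qed auto
  have I2: "((\<lambda>t. P2 t * f'' t) has_integral
      ((P2 x' * g x' - (x' - m) * f x' + F x') - (P2 x * g x - (x - m) * f x + F x))) {x..x'}"
    unfolding F_def
  proof (rule piece[OF xx' _ cf _ d1 dg gf])
    show "{x..x'} \<subseteq> {a..b}" using xa x'b by auto
    have "P2 t = 0" if "t \<in> {x..x'}" "t \<notin> {a<..<b}" for t
    proof -
      have "t = a \<or> t = b" using that xa x'b by auto
      then have "x = a" using that xa x'b by (auto simp: x'_def)
      moreover have "(t - m)^2 = (m - a)^2" using \<open>t = a \<or> t = b\<close> by (auto simp: m_def power2_eq_square field_simps)
      ultimately show ?thesis by (simp add: P2_def C_def)
    qed
    then show "continuous_on {x..x'} (\<lambda>t. P2 t * g t)"
      by (intro prod_cont[of x x' a b, OF _ _ cg bd]) (use xa x'b in \<open>auto simp: P2_def intro!: continuous_intros\<close>)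
    show "(P2 has_real_derivative t - m) (at t)" for t
      unfolding P2_def by (auto intro!: derivative_eq_intros simp: power2_eq_square field_simps)
  qed auto
  have I3: "((\<lambda>t. P3 t * f'' t) has_integral
      ((P3 b * g b - (b - b) * f b + F b) - (P3 x' * g x' - (x' - b) * f x' + F x'))) {x'..b}"
    unfolding F_def
  proof (rule piece[OF x'b _ cf _ d1 dg gf])
    show "{x'..b} \<subseteq> {a..b}" using ax' by auto
    show "continuous_on {x'..b} (\<lambda>t. P3 t * g t)"
      by (rule prod_cont[of x' b a b, OF _ _ cg bd]) (use ax' in \<open>auto simp: P3_def intro!: continuous_intros\<close>)
    show "(P3 has_real_derivative t - b) (at t)" for t
      unfolding P3_def by (auto intro!: derivative_eq_intros simp: power2_eq_square field_simps)
  qed auto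
  have e12: "P1 x = P2 x" by (simp add: P1_def P2_def C_def power2_eq_square algebra_simps)
  have e23: "P2 x' = P3 x'" by (simp add: P2_def P3_def C_def x'_def m_def power2_eq_square algebra_simps)
  have e13: "P1 x = P3 x" if "x = x'" using that by (simp add: P1_def P3_def x'_def power2_eq_square algebra_simps)
  have pw1: "Pw t = P1 t" if "t \<in> {a..x}" for t using that by (simp add: Pw_def)
  have pw2: "Pw t = P2 t" if "t \<in> {x..x'}" for t using that e12 by (auto simp: Pw_def)
  have pw3: "Pw t = P3 t" if "t \<in> {x'..b}" for t using that e12 e23 e13 xx' by (auto simp: Pw_def)
  define V1 where "V1 = (P1 x * g x - (x - a) * f x + F x) - (P1 a * g a - (a - a) * f a + F a)"
  define V2 where "V2 = (P2 x' * g x' - (x' - m) * f x' + F x') - (P2 x * g x - (x - m) * f x + F x)"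
  define V3 where "V3 = (P3 b * g b - (b - b) * f b + F b) - (P3 x' * g x' - (x' - b) * f x' + F x')"
  have J1: "((\<lambda>t. Pw t * f'' t) has_integral V1) {a..x}"
    using I1 unfolding V1_def by (rule has_integral_eq[rotated]) (simp add: pw1)
  have J2: "((\<lambda>t. Pw t * f'' t) has_integral V2) {x..x'}"
    using I2 unfolding V2_def by (rule has_integral_eq[rotated]) (simp add: pw2)
  have J3: "((\<lambda>t. Pw t * f'' t) has_integral V3) {x'..b}"
    using I3 unfolding V3_def by (rule has_integral_eq[rotated]) (simp add: pw3)
  have J: "((\<lambda>t. Pw t * f'' t) has_integral (V1 + (V2 + V3))) {a..b}"
    using has_integral_combine[OF xa _ J1 has_integral_combine[OF xx' x'b J2 J3]] xx' x'b by simp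
  have Vsum: "V1 + (V2 + V3) = F b - (b - a)/2 * (f x + f x')"
  proof -
    have "P1 a = 0" "P3 b = 0" "F a = 0" by (auto simp: P1_def P3_def F_def)
    then show ?thesis unfolding V1_def V2_def V3_def using e12 e23
      by (simp add: x'_def m_def field_simps)
  qed
  define G where "G = (\<lambda>t. ((t-m)^5/5 + 2*C*(t-m)^3/3 + C^2*(t-m))/4)"
  have K1: "((\<lambda>t. (Pw t)^2) has_integral ((x-a)^5/20 - (a-a)^5/20)) {a..x}"
    using poly_int1[OF xa, of a] by (rule has_integral_eq[rotated]) (simp add: pw1 P1_def)
  have K2: "((\<lambda>t. (Pw t)^2) has_integral (G x' - G x)) {x..x'}"
    unfolding G_def using poly_int2[OF xx', of m C]
    by (rule has_integral_eq[rotated]) (simp add: pw2 P2_def)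
  have K3: "((\<lambda>t. (Pw t)^2) has_integral ((b-b)^5/20 - (x'-b)^5/20)) {x'..b}"
    using poly_int1[OF x'b, of b] by (rule has_integral_eq[rotated]) (simp add: pw3 P3_def)
  define IP where "IP = ((x-a)^5/20 - (a-a)^5/20) + ((G x' - G x) + ((b-b)^5/20 - (x'-b)^5/20))"
  have K: "((\<lambda>t. (Pw t)^2) has_integral IP) {a..b}"
    unfolding IP_def using has_integral_combine[OF xa _ K1 has_integral_combine[OF xx' x'b K2 K3]] xx' x'b by simp
  define J0 where "J0 = integral {a..b} (\<lambda>t. (f'' t)\<^sup>2)"
  have hJ: "((\<lambda>t. (f'' t)^2) has_integral J0) {a..b}" using sq unfolding J0_def by (simp add: has_integral_integral)
  have cs: "\<bar>integral {a..b} (\<lambda>t. Pw t * f'' t)\<bar> \<le> sqrt IP * sqrt J0"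
    by (rule int_cs[OF has_integral_integrable[OF J] K hJ])
  have intv: "integral {a..b} (\<lambda>t. Pw t * f'' t) = F b - (b - a)/2 * (f x + f x')"
    using integral_unique[OF J] Vsum by simp
  define u where "u = x - a"
  define v where "v = m - x"
  have u0: "u \<ge> 0" and v0: "v \<ge> 0" using xa xm by (auto simp: u_def v_def)
  have hb: "b - a = 2*(u+v)" by (simp add: u_def v_def m_def)
  have qx: "x - (3*a+b)/4 = (u-v)/2" by (simp add: u_def v_def m_def field_simps)
  have IPuv: "IP = u^5/10 + v^5/10 + (u^2 - v^2) * v^3 / 3 + (u^2 - v^2)^2 * v / 2"
  proof -
    have h1: "x' - m = v" "x - m = -v" "x' - b = -u" "C = u^2 - v^2" "x - a = u"
      by (simp_all add: x'_def v_def u_def m_def C_def field_simps)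
    have g1: "G x' - G x = v^5/10 + C* v^3/3 + C^2* v/2"
    proof -
      have "G x' - G x = ((v^5/5 + 2*C* v^3/3 + C^2* v) - (-(v^5)/5 + 2*C*(-(v^3))/3 + C^2*(-v)))/4"
        unfolding G_def h1(1,2) by (simp add: power_minus_odd field_simps)
      then show ?thesis by (simp add: field_simps)
    qed
    have "IP = u^5/20 + (v^5/10 + C* v^3/3 + C^2* v/2) + u^5/20"
      unfolding IP_def g1 h1 by (simp add: power_minus_odd)
    then show ?thesis using h1(4) by simp
  qed
  have IP0: "IP \<ge> 0" by (rule has_integral_nonneg[OF K]) simp
  define Q where "Q = (b - a)\<^sup>2 / 48 + (x - (3*a + b)/4)\<^sup>2"
  have Q0: "Q \<ge> 0" unfolding Q_def by simp
  have eQ: "(b-a)^3 * Q = (2*(u+v))^3 * (((u-v)/2)^2 + (2*(u+v))^2/48)"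
    unfolding Q_def hb qx by (simp only: add.commute)
  have poly: "10 * IP \<le> (b-a)^3 * Q"
    unfolding eQ IPuv by (rule polyineq[OF u0 v0])
  have pi10: "pi^2 \<le> 10"
  proof -
    have p: "pi \<le> 316/100" using pi_approx(2) by simp
    have "pi^2 \<le> (316/100)^2" by (rule power_mono[OF p]) simp
    also have "(316/100::real)^2 \<le> 10" by (simp add: power2_eq_square)
    finally show ?thesis .
  qed
  have "pi^2 * IP \<le> 10 * IP" using pi10 IP0 by (rule mult_right_mono)
  then have key: "pi^2 * IP \<le> (b-a)^3 * Q" using poly by linarith
  have "pi * sqrt IP = sqrt (pi^2 * IP)" by (simp add: real_sqrt_mult)
  also have "\<dots> \<le> sqrt ((b-a)^3 * Q)" using key by (rule real_sqrt_le_mono)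
  also have "\<dots> = (b - a) * sqrt (b - a) * sqrt Q"
    using ab by (simp add: real_sqrt_mult power3_eq_cube real_sqrt_mult_self)
  finally have k2: "pi * sqrt IP \<le> (b - a) * sqrt (b - a) * sqrt Q" .
  have k3: "sqrt IP / (b - a) \<le> sqrt (b - a) / pi * sqrt Q"
    using k2 ab pi_gt_zero by (simp add: field_simps)
  have E: "(f x + f (a + b - x)) / 2 - (1 / (b - a)) * integral {a..b} f
         = - (integral {a..b} (\<lambda>t. Pw t * f'' t)) / (b - a)"
  proof -
    have aux: "h \<noteq> 0 \<Longrightarrow> h/2 * s / h = s / 2" for h s :: real by simp
    have "integral {a..b} (\<lambda>t. Pw t * f'' t) / (b - a) = (F b - (b - a)/2 * (f x + f x')) / (b - a)"
      by (simp add: intv)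
    also have "\<dots> = F b / (b - a) - (b - a)/2 * (f x + f x') / (b - a)"
      by (rule diff_divide_distrib)
    also have "(b - a)/2 * (f x + f x') / (b - a) = (f x + f x') / 2"
      by (rule aux) (use ab in simp)
    finally show ?thesis by (simp add: F_def x'_def)
  qed
  have "\<bar>(f x + f (a + b - x)) / 2 - (1 / (b - a)) * integral {a..b} f\<bar>
      = \<bar>integral {a..b} (\<lambda>t. Pw t * f'' t)\<bar> / (b - a)" using E ab by simp
  also have "\<dots> \<le> sqrt IP * sqrt J0 / (b - a)" using cs ab by (simp add: divide_right_mono)
  also have "\<dots> = (sqrt IP / (b - a)) * sqrt J0" by simp
  also have "\<dots> \<le> (sqrt (b - a) / pi * sqrt Q) * sqrt J0" using k3 by (rule mult_right_mono) (simp add: has_integral_nonneg[OF hJ])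
  finally show "\<bar>(f x + f (a + b - x)) / 2 - (1 / (b - a)) * integral {a..b} f\<bar>
      \<le> sqrt (b - a) / pi * sqrt ((b - a)\<^sup>2 / 48 + (x - (3*a + b)/4)\<^sup>2) * L2norm f'' a b"
    by (simp add: L2norm_def J0_def Q_def)
qed


end
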